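(* For all integers $M,N,p\ge1$, $$\delta_p(M,N)=\sum_{s=1}^{M}\sum_{t=1}^{N}\delta_p^{st}(M,N).$$
   Context: $P(p)$ is the set of partitions of $\{1,\dots,p\}$, $|\pi|$ the number of blocks, and $S_{ps}=\#\{\pi\in P(p):|\pi|=s\}$ (Stirling numbers). For $\pi,\sigma\in P(p)$, write $\pi\triangleright\sigma$ if for every block $\beta$ of $\pi$ and every block $\gamma$ of $\sigma$, $\#\{x:x\in\beta,x\in\gamma\}=\#\{x:x\in\beta,x+1\in\gamma\}$, indices modulo $p$. For $1\le s,t\le p$ let $\varepsilon_p(s,t)=\frac{\#\{(\pi,\sigma)\in P(p)^2:\pi\triangleright\sigma,|\pi|=s,|\sigma|=t\}}{S_{ps}S_{pt}}$ (the probability that $\pi\triangleright\sigma$ for uniformly random $\pi,\sigma$ with $s$ and $t$ blocks). Set $\delta_p^{st}(M,N)=\frac{M!}{(M-s)!}\cdot\frac{S_{ps}}{M^p}\cdot\frac{N!}{(N-t)!}\cdot\frac{S_{pt}}{N^p}\cdot\varepsilon_p(s,t)$ for $1\le s\le\min(M,p)$, $1\le t\le\min(N,p)$, and $\delta_p^{st}(M,N)=0$ otherwise. Also $\delta_p(M,N)=\frac{1}{(MN)^p}\#\{(a,b)\in\mathbb Z_M^p\times\mathbb Z_N^p:\{(a_y,b_y)\}_{y=1}^p=\{(a_y,b_{y+1})\}_{y=1}^p\text{ as multisets}\}$, with $b_{p+1}=b_1$. *)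

theory Defs
  imports Complex_Main "HOL-Library.Disjoint_Sets" "HOL-Library.Multiset" "HOL-Library.FuncSet"
begin

definition set_partitions :: "nat \<Rightarrow> nat set set set" where
  "set_partitions p = {P. partition_on {1..p} P}"

text \<open>Cyclic successor on {1,...,p}: y+1, with p+1 identified with 1.\<close>
definition cyc_succ :: "nat \<Rightarrow> nat \<Rightarrow> nat" where
  "cyc_succ p y = y mod p + 1"

definition part_rel :: "nat \<Rightarrow> nat set set \<Rightarrow> nat set set \<Rightarrow> bool" where
  "part_rel p \<pi> \<sigma> \<longleftrightarrow> (\<forall>\<beta>\<in>\<pi>. \<forall>\<gamma>\<in>\<sigma>.
      card {x. x \<in> \<beta> \<and> x \<in> \<gamma>} = card {x. x \<in> \<beta> \<and> cyc_succ p x \<in> \<gamma>})"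

definition S_count :: "nat \<Rightarrow> nat \<Rightarrow> nat" where
  "S_count p s = card {\<pi> \<in> set_partitions p. card \<pi> = s}"

definition eps :: "nat \<Rightarrow> nat \<Rightarrow> nat \<Rightarrow> real" where
  "eps p s t = real (card {(\<pi>, \<sigma>). \<pi> \<in> set_partitions p \<and> \<sigma> \<in> set_partitions p \<and>
        part_rel p \<pi> \<sigma> \<and> card \<pi> = s \<and> card \<sigma> = t})
     / (real (S_count p s) * real (S_count p t))"

definition delta_st :: "nat \<Rightarrow> nat \<Rightarrow> nat \<Rightarrow> nat \<Rightarrow> nat \<Rightarrow> real" where
  "delta_st p M N s t =
    (if 1 \<le> s \<and> s \<le> min M p \<and> 1 \<le> t \<and> t \<le> min N p then
       (fact M / fact (M - s)) * (real (S_count p s) / real M ^ p)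
     * (fact N / fact (N - t)) * (real (S_count p t) / real N ^ p) * eps p s t
     else 0)"

text \<open>delta_p(M,N): tuples a in Z_M^p, b in Z_N^p indexed by {1..p}, represented as
  extensional functions {1..p} -> {0..<M} resp. {0..<N}.\<close>
definition delta :: "nat \<Rightarrow> nat \<Rightarrow> nat \<Rightarrow> real" where
  "delta p M N = real (card {(a, b). a \<in> {1..p} \<rightarrow>\<^sub>E {..<M} \<and> b \<in> {1..p} \<rightarrow>\<^sub>E {..<N} \<and>
        image_mset (\<lambda>y. (a y, b y)) (mset_set {1..p})
      = image_mset (\<lambda>y. (a y, b (cyc_succ p y))) (mset_set {1..p})})
     / (real M * real N) ^ p"

end

theory Submission imports Defs begin

lemma ff_fact_nat: "s \<le> M \<Longrightarrow> (\<Prod>i\<in>{0..<s}. M - i) * fact (M - s) = (fact M :: nat)"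
proof (induction s)
  case 0 then show ?case by simp
next
  case (Suc s)
  have e: "M - s = Suc (M - Suc s)" using Suc.prems by simp
  have "fact (M - s) = (M - s) * (fact (M - Suc s) :: nat)"
    unfolding e by (simp only: fact_Suc) simp
  moreover have "(\<Prod>i\<in>{0..<Suc s}. M - i) = (\<Prod>i\<in>{0..<s}. M - i) * (M - s)"
    by (rule prod.atLeast0_lessThan_Suc)
  moreover have "(\<Prod>i\<in>{0..<s}. M - i) * fact (M - s) = (fact M :: nat)" using Suc by simp
  ultimately show ?case by (metis mult.assoc)
qed

lemma ff_fact: "s \<le> M \<Longrightarrow> real (\<Prod>i\<in>{0..<s}. M - i) = fact M / fact (M - s)"
proof -
  assume "s \<le> M"
  from ff_fact_nat[OF this] have h: "real (\<Prod>i\<in>{0..<s}. M - i) * fact (M - s) = fact M"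
    by (metis of_nat_fact of_nat_mult)
  have "(fact (M - s) :: real) \<noteq> 0" by simp
  then show ?thesis using h by (simp add: eq_divide_eq)
qed

lemma ff_zero: "M < s \<Longrightarrow> (\<Prod>i\<in>{0..<s}. M - i) = (0::nat)"
  by (intro prod_zero) (auto intro!: bexI[of _ M])
definition ker :: "nat set \<Rightarrow> (nat \<Rightarrow> 'b) \<Rightarrow> nat set set" where
  "ker I a = (\<lambda>y. {x\<in>I. a x = a y}) ` I"

lemma ker_partition: "partition_on I (ker I a)"
proof (rule partition_onI)
  show "\<Union> (ker I a) = I" unfolding ker_def by blast
  show "{} \<notin> ker I a" unfolding ker_def by blast
  fix p q assume "p \<in> ker I a" "q \<in> ker I a" "p \<noteq> q"
  then obtain y z where y: "y \<in> I" "p = {x\<in>I. a x = a y}" and z: "z \<in> I" "q = {x\<in>I. a x = a z}"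
    unfolding ker_def by blast
  show "disjnt p q"
  proof (cases "a y = a z")
    case True then show ?thesis using y z \<open>p \<noteq> q\<close> by simp
  next
    case False then show ?thesis using y z unfolding disjnt_def by auto
  qed
qed

lemma ker_block: "\<beta> \<in> ker I a \<Longrightarrow> x \<in> \<beta> \<Longrightarrow> \<beta> = {y\<in>I. a y = a x}"
  unfolding ker_def by auto

lemma count_img: "finite S \<Longrightarrow> count (image_mset f (mset_set S)) z = card {y\<in>S. f y = z}"
proof -
  assume f: "finite S"
  have "count (image_mset f (mset_set S)) z = (\<Sum>y\<in>f -` {z} \<inter> S. 1)"
    unfolding count_image_mset using f by (intro sum.cong) auto
  also have "f -` {z} \<inter> S = {y\<in>S. f y = z}" by blast
  finally show ?thesis by simp
qed

lemma part_card_le: "finite I \<Longrightarrow> partition_on I P \<Longrightarrow> card P \<le> card I"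
proof -
  assume f: "finite I" and P: "partition_on I P"
  have fb: "\<And>b. b \<in> P \<Longrightarrow> finite b" proof - fix b assume "b \<in> P" then have "b \<subseteq> I" using partition_onD1[OF P] by auto then show "finite b" using f finite_subset by auto qed
  have ne: "\<And>b. b \<in> P \<Longrightarrow> card b \<ge> 1" 
  proof - fix b assume "b \<in> P" then have "b \<noteq> {}" "finite b" using fb partition_onD3[OF P] by auto
    then show "card b \<ge> 1" by (simp add: Suc_leI card_gt_0_iff) qed
  have "card P = (\<Sum>b\<in>P. 1)" by simp
  also have "\<dots> \<le> (\<Sum>b\<in>P. card b)" by (rule sum_mono) (use ne in auto)
  also have "\<dots> = card I" using product_partition[OF P fb] by simp
  finally show ?thesis .
qed


lemma part_unique:
  assumes P: "partition_on I P" and y: "y \<in> I"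
  shows "\<exists>!b. b \<in> P \<and> y \<in> b"
proof -
  obtain b where b: "b \<in> P" "y \<in> b" using partition_onD1[OF P] y by blast
  moreover have "c = b" if "c \<in> P" "y \<in> c" for c
  proof (rule ccontr)
    assume "c \<noteq> b"
    then have "disjnt c b" using partition_onD2[OF P] that b unfolding disjoint_def by blast
    then show False using that b unfolding disjnt_def by blast
  qed
  ultimately show ?thesis by blast
qed

lemma ker_count:
  assumes fin: "finite I" and P: "partition_on I P"
  shows "card {a \<in> I \<rightarrow>\<^sub>E C. ker I a = P} = card {g \<in> P \<rightarrow>\<^sub>E C. inj_on g P}"
proof -
  define blk where "blk y = (THE b. b \<in> P \<and> y \<in> b)" for y
  have blk1: "blk y \<in> P" "y \<in> blk y" if "y \<in> I" for y
    using theI'[OF part_unique[OF P that]] unfolding blk_def by auto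
  have blk2: "blk y = b" if "b \<in> P" "y \<in> b" for y b
    unfolding blk_def using part_unique[OF P, of y] that partition_onD1[OF P]
    by (intro the_equality) auto
  have sub: "b \<subseteq> I" if "b \<in> P" for b using partition_onD1[OF P] that by blast
  have ne: "(SOME x. x \<in> b) \<in> b" if "b \<in> P" for b
    using partition_onD3[OF P] that by (metis all_not_in_conv someI_ex)
  define \<Phi> where "\<Phi> a = restrict (\<lambda>b. a (SOME x. x \<in> b)) P" for a :: "nat \<Rightarrow> 'a"
  define \<Psi> where "\<Psi> g = restrict (\<lambda>y. g (blk y)) I" for g :: "nat set \<Rightarrow> 'a"
  have "bij_betw \<Phi> {a \<in> I \<rightarrow>\<^sub>E C. ker I a = P} {g \<in> P \<rightarrow>\<^sub>E C. inj_on g P}"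
  proof (rule bij_betw_byWitness[where f'=\<Psi>])
    show "\<forall>a\<in>{a \<in> I \<rightarrow>\<^sub>E C. ker I a = P}. \<Psi> (\<Phi> a) = a"
    proof (intro ballI)
      fix a assume "a \<in> {a \<in> I \<rightarrow>\<^sub>E C. ker I a = P}"
      then have a: "a \<in> I \<rightarrow>\<^sub>E C" and k: "ker I a = P" by auto
      show "\<Psi> (\<Phi> (a)) = a"
      proof (rule ext)
        fix y show "\<Psi> (\<Phi> a) y = a y"
        proof (cases "y \<in> I")
          case True
          have b: "blk y \<in> ker I a" using blk1[OF True] k by simp
          have "blk y = {x\<in>I. a x = a y}" by (rule ker_block[OF b blk1(2)[OF True]])
          moreover have "(SOME x. x \<in> blk y) \<in> blk y" using ne blk1[OF True] by blast
          ultimately show ?thesis using True blk1[OF True] unfolding \<Psi>_def \<Phi>_def by auto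
        next
          case False then show ?thesis using a unfolding \<Psi>_def by (auto simp: PiE_def extensional_def)
        qed
      qed
    qed
    show "\<forall>g\<in>{g \<in> P \<rightarrow>\<^sub>E C. inj_on g P}. \<Phi> (\<Psi> g) = g"
    proof (intro ballI)
      fix g assume "g \<in> {g \<in> P \<rightarrow>\<^sub>E C. inj_on g P}"
      then have g: "g \<in> P \<rightarrow>\<^sub>E C" by auto
      show "\<Phi> (\<Psi> g) = g"
      proof (rule ext)
        fix b show "\<Phi> (\<Psi> g) b = g b"
        proof (cases "b \<in> P")
          case True
          have "(SOME x. x \<in> b) \<in> b" using ne True by blast
          then show ?thesis using True blk2 sub unfolding \<Psi>_def \<Phi>_def by auto
        next
          case False then show ?thesis using g unfolding \<Phi>_def by (auto simp: PiE_def extensional_def)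
        qed
      qed
    qed
    show "\<Phi> ` {a \<in> I \<rightarrow>\<^sub>E C. ker I a = P} \<subseteq> {g \<in> P \<rightarrow>\<^sub>E C. inj_on g P}"
    proof (rule image_subsetI)
      fix a assume "a \<in> {a \<in> I \<rightarrow>\<^sub>E C. ker I a = P}"
      then have a: "a \<in> I \<rightarrow>\<^sub>E C" and k: "ker I a = P" by auto
      have "\<Phi> a \<in> P \<rightarrow>\<^sub>E C" using a ne sub unfolding \<Phi>_def by auto
      moreover have "inj_on (\<Phi> a) P"
      proof (rule inj_onI)
        fix b1 b2 assume b1: "b1 \<in> P" and b2: "b2 \<in> P" and e: "\<Phi> a b1 = \<Phi> a b2"
        have "b1 = {x\<in>I. a x = a (SOME x. x \<in> b1)}" using ker_block[of b1 I a] ne b1 k by auto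
        moreover have "b2 = {x\<in>I. a x = a (SOME x. x \<in> b2)}" using ker_block[of b2 I a] ne b2 k by auto
        moreover have "a (SOME x. x \<in> b1) = a (SOME x. x \<in> b2)" using e b1 b2 unfolding \<Phi>_def by simp
        ultimately show "b1 = b2" by simp
      qed
      ultimately show "\<Phi> a \<in> {g \<in> P \<rightarrow>\<^sub>E C. inj_on g P}" by simp
    qed
    show "\<Psi> ` {g \<in> P \<rightarrow>\<^sub>E C. inj_on g P} \<subseteq> {a \<in> I \<rightarrow>\<^sub>E C. ker I a = P}"
    proof (rule image_subsetI)
      fix g assume "g \<in> {g \<in> P \<rightarrow>\<^sub>E C. inj_on g P}"
      then have g: "g \<in> P \<rightarrow>\<^sub>E C" and inj: "inj_on g P" by auto
      have memI: "\<Psi> g \<in> I \<rightarrow>\<^sub>E C" using g blk1 unfolding \<Psi>_def by auto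
      have "ker I (\<Psi> g) = (\<lambda>y. {x\<in>I. blk x = blk y}) ` I"
        unfolding ker_def
      proof (rule image_cong[OF refl])
        fix y assume y: "y \<in> I"
        show "{x \<in> I. \<Psi> g x = \<Psi> g y} = {x \<in> I. blk x = blk y}"
        proof -
          have "\<Psi> g x = \<Psi> g y \<longleftrightarrow> blk x = blk y" if x: "x \<in> I" for x
            using y x blk1 inj_onD[OF inj, of "blk x" "blk y"] unfolding \<Psi>_def by auto
          then show ?thesis by blast
        qed
      qed
      also have "\<dots> = blk ` I"
      proof (rule image_cong[OF refl])
        fix y assume y: "y \<in> I"
        show "{x \<in> I. blk x = blk y} = blk y"
        proof (intro equalityI subsetI)
          fix x assume "x \<in> {x \<in> I. blk x = blk y}" then show "x \<in> blk y" using blk1 by force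
        next
          fix x assume x: "x \<in> blk y"
          have "x \<in> I" using sub blk1 y x by blast
          moreover have "blk x = blk y" using blk2 blk1 y x by blast
          ultimately show "x \<in> {x \<in> I. blk x = blk y}" by simp
        qed
      qed
      also have "\<dots> = P"
      proof safe
        fix y assume "y \<in> I" then show "blk y \<in> P" using blk1 by blast
      next
        fix b assume b: "b \<in> P"
        then have "(SOME x. x \<in> b) \<in> b" using ne by blast
        then show "b \<in> blk ` I" using blk2[OF b] sub[OF b] by (intro image_eqI) auto
      qed
      finally have "ker I (\<Psi> g) = P" .
      with memI show "\<Psi> g \<in> {a \<in> I \<rightarrow>\<^sub>E C. ker I a = P}" by simp
    qed
  qed
  then show ?thesis by (rule bij_betw_same_card)
qed

lemma ker_count2:
  assumes fin: "finite I" and P: "partition_on I P"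
  shows "card {a \<in> I \<rightarrow>\<^sub>E {..<M}. ker I a = P} = (\<Prod>i\<in>{0..<card P}. M - i)"
proof -
  have fP: "finite P" using finite_elements[OF fin P] .
  show ?thesis unfolding ker_count[OF fin P]
    using card_inj_on_subset_funcset[OF fP finite_lessThan[of M] subset_refl] by simp
qed


lemma cyc_in: "1 \<le> p \<Longrightarrow> cyc_succ p y \<in> {1..p}"
proof -
  assume "1 \<le> p"
  then have "y mod p < p" by simp
  then show ?thesis unfolding cyc_succ_def by simp
qed

lemma mset_iff:
  assumes p: "1 \<le> p"
  shows "(image_mset (\<lambda>y. (a y, b y)) (mset_set {1..p})
      = image_mset (\<lambda>y. (a y, b (cyc_succ p y))) (mset_set {1..p}))
     \<longleftrightarrow> part_rel p (ker {1..p} a) (ker {1..p} b)"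
proof -
  define I where "I = {1..p::nat}"
  define c1 where "c1 u v = card {y\<in>I. a y = u \<and> b y = v}" for u v
  define c2 where "c2 u v = card {y\<in>I. a y = u \<and> b (cyc_succ p y) = v}" for u v
  have fI: "finite I" unfolding I_def by simp
  have L: "(image_mset (\<lambda>y. (a y, b y)) (mset_set I)
      = image_mset (\<lambda>y. (a y, b (cyc_succ p y))) (mset_set I)) \<longleftrightarrow> (\<forall>u v. c1 u v = c2 u v)"
    unfolding multiset_eq_iff count_img[OF fI] c1_def c2_def by auto
  have s1: "{x. x \<in> {x\<in>I. a x = a y} \<and> x \<in> {x\<in>I. b x = b z}} = {x\<in>I. a x = a y \<and> b x = b z}" for y z
    by blast
  have s2: "{x. x \<in> {x\<in>I. a x = a y} \<and> cyc_succ p x \<in> {x\<in>I. b x = b z}} = {x\<in>I. a x = a y \<and> b (cyc_succ p x) = b z}" for y z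
    using cyc_in[OF p] unfolding I_def by blast
  have R: "part_rel p (ker I a) (ker I b) \<longleftrightarrow> (\<forall>y\<in>I. \<forall>z\<in>I. c1 (a y) (b z) = c2 (a y) (b z))"
    unfolding part_rel_def ker_def c1_def c2_def ball_simps s1 s2 by (rule refl)
  have "(\<forall>u v. c1 u v = c2 u v) \<longleftrightarrow> (\<forall>y\<in>I. \<forall>z\<in>I. c1 (a y) (b z) = c2 (a y) (b z))"
  proof
    assume "\<forall>u v. c1 u v = c2 u v" then show "\<forall>y\<in>I. \<forall>z\<in>I. c1 (a y) (b z) = c2 (a y) (b z)" by blast
  next
    assume H: "\<forall>y\<in>I. \<forall>z\<in>I. c1 (a y) (b z) = c2 (a y) (b z)"
    show "\<forall>u v. c1 u v = c2 u v"
    proof (intro allI)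
      fix u v
      show "c1 u v = c2 u v"
      proof (cases "u \<in> a ` I \<and> v \<in> b ` I")
        case True then show ?thesis using H by blast
      next
        case False
        then have e: "{y\<in>I. a y = u \<and> b y = v} = {}" "{y\<in>I. a y = u \<and> b (cyc_succ p y) = v} = {}"
          using cyc_in[OF p] unfolding I_def by auto
        show ?thesis unfolding c1_def c2_def e by simp
      qed
    qed
  qed
  then show ?thesis using L R unfolding I_def by simp
qed


lemma delta_sum:
  fixes a b M N :: nat
  assumes a1: "1 \<le> a" and b1: "1 \<le> b"
    and za: "M < a \<Longrightarrow> G a b = 0" and zb: "N < b \<Longrightarrow> G a b = 0"
  shows "(\<Sum>s=1..M. \<Sum>t=1..N. if a = s \<and> b = t then G s t else 0) = (G a b :: real)"
proof (cases "a \<le> M \<and> b \<le> N")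
  case True
  have inner: "(\<Sum>t=1..N. if a = s \<and> b = t then G s t else 0) = (if a = s then G s b else 0)" for s
  proof (cases "a = s")
    case True
    then have "(\<Sum>t=1..N. if a = s \<and> b = t then G s t else 0) = (\<Sum>t=1..N. if b = t then G s t else 0)"
      by simp
    also have "\<dots> = G s b" using \<open>a \<le> M \<and> b \<le> N\<close> b1 by (subst sum.delta') auto
    finally show ?thesis using True by simp
  qed simp
  have "(\<Sum>s=1..M. \<Sum>t=1..N. if a = s \<and> b = t then G s t else 0) = (\<Sum>s=1..M. if a = s then G s b else 0)"
    unfolding inner ..
  also have "\<dots> = G a b" using True a1 by (subst sum.delta') auto
  finally show ?thesis .
next
  case False
  have "G a b = 0" using False za zb by linarith
  moreover have "(\<Sum>s=1..M. \<Sum>t=1..N. if a = s \<and> b = t then G s t else 0) = 0"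
  proof (intro sum.neutral ballI)
    fix s t assume "s \<in> {1..M}" "t \<in> {1..N}"
    then show "(if a = s \<and> b = t then G s t else 0) = 0" using False by auto
  qed
  ultimately show ?thesis by simp
qed

theorem proposition7p3:
  fixes M N p :: nat
  assumes "M \<ge> 1" and "N \<ge> 1" and "p \<ge> 1"
  shows "delta p M N = (\<Sum>s=1..M. \<Sum>t=1..N. delta_st p M N s t)"
proof -
  have p1: "1 \<le> p" using assms by simp
  define I where "I = {1..p}"
  define P where "P = set_partitions p"
  define R where "R = {(\<pi>, \<sigma>). \<pi> \<in> P \<and> \<sigma> \<in> P \<and> part_rel p \<pi> \<sigma>}"
  define ff where "ff K s = (\<Prod>i\<in>{0..<s}. K - i)" for K s :: nat
  define Fa where "Fa \<pi> = {a \<in> I \<rightarrow>\<^sub>E {..<M}. ker I a = \<pi>}" for \<pi>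
  define Fb where "Fb \<sigma> = {b \<in> I \<rightarrow>\<^sub>E {..<N}. ker I b = \<sigma>}" for \<sigma>
  define A where "A = {(a, b). a \<in> I \<rightarrow>\<^sub>E {..<M} \<and> b \<in> I \<rightarrow>\<^sub>E {..<N} \<and>
        image_mset (\<lambda>y. (a y, b y)) (mset_set I)
      = image_mset (\<lambda>y. (a y, b (cyc_succ p y))) (mset_set I)}"
  define c where "c s t = card {x\<in>R. card (fst x) = s \<and> card (snd x) = t}" for s t
  have fI: "finite I" unfolding I_def by simp
  have cI: "card I = p" unfolding I_def by simp
  have PI: "\<pi> \<in> P \<longleftrightarrow> partition_on I \<pi>" for \<pi> unfolding P_def set_partitions_def I_def by simp
  have fP: "finite P" using finitely_many_partition_on[OF fI] PI by (simp add: Collect_mem_eq P_def set_partitions_def I_def)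
  have fR: "finite R"
    by (rule finite_subset[of _ "P \<times> P"]) (use fP in \<open>auto simp: R_def\<close>)
  have Pcard: "1 \<le> card \<pi> \<and> card \<pi> \<le> p" if "\<pi> \<in> P" for \<pi>
  proof
    have pp: "partition_on I \<pi>" using that PI by simp
    show "card \<pi> \<le> p" using part_card_le[OF fI pp] cI by simp
    have "\<pi> \<noteq> {}" using partition_onD1[OF pp] p1 unfolding I_def by auto
    moreover have "finite \<pi>" using finite_elements[OF fI pp] .
    ultimately show "1 \<le> card \<pi>" by (simp add: Suc_leI card_gt_0_iff)
  qed
  have A_eq: "A = (\<Union>x\<in>R. Fa (fst x) \<times> Fb (snd x))"
  proof (intro equalityI subsetI)
    fix z assume "z \<in> A"
    then obtain a b where z: "z = (a, b)" and a: "a \<in> I \<rightarrow>\<^sub>E {..<M}" and b: "b \<in> I \<rightarrow>\<^sub>E {..<N}"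
      and m: "image_mset (\<lambda>y. (a y, b y)) (mset_set I)
      = image_mset (\<lambda>y. (a y, b (cyc_succ p y))) (mset_set I)" unfolding A_def by auto
    have "part_rel p (ker I a) (ker I b)" using m mset_iff[OF p1, of a b] unfolding I_def by simp
    then have "(ker I a, ker I b) \<in> R" unfolding R_def using PI ker_partition by auto
    moreover have "z \<in> Fa (ker I a) \<times> Fb (ker I b)" using z a b unfolding Fa_def Fb_def by simp
    ultimately show "z \<in> (\<Union>x\<in>R. Fa (fst x) \<times> Fb (snd x))" by force
  next
    fix z assume "z \<in> (\<Union>x\<in>R. Fa (fst x) \<times> Fb (snd x))"
    then obtain \<pi> \<sigma> a b where x: "(\<pi>, \<sigma>) \<in> R" and z: "z = (a, b)" and a: "a \<in> Fa \<pi>" and b: "b \<in> Fb \<sigma>"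
      by auto
    have "part_rel p (ker I a) (ker I b)" using x a b unfolding R_def Fa_def Fb_def by simp
    then have "image_mset (\<lambda>y. (a y, b y)) (mset_set I)
      = image_mset (\<lambda>y. (a y, b (cyc_succ p y))) (mset_set I)" using mset_iff[OF p1, of a b] unfolding I_def by simp
    then show "z \<in> A" using z a b unfolding A_def Fa_def Fb_def by simp
  qed
  have fFa: "finite (Fa \<pi>)" for \<pi> unfolding Fa_def by (rule finite_subset[of _ "I \<rightarrow>\<^sub>E {..<M}"]) (auto intro!: finite_PiE fI)
  have fFb: "finite (Fb \<pi>)" for \<pi> unfolding Fb_def by (rule finite_subset[of _ "I \<rightarrow>\<^sub>E {..<N}"]) (auto intro!: finite_PiE fI)
  have cardA: "card A = (\<Sum>x\<in>R. ff M (card (fst x)) * ff N (card (snd x)))"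
  proof -
    have "card A = (\<Sum>x\<in>R. card (Fa (fst x) \<times> Fb (snd x)))"
      unfolding A_eq
    proof (rule card_UN_disjoint[OF fR])
      show "\<forall>x\<in>R. finite (Fa (fst x) \<times> Fb (snd x))" using fFa fFb by simp
      show "\<forall>x\<in>R. \<forall>y\<in>R. x \<noteq> y \<longrightarrow> Fa (fst x) \<times> Fb (snd x) \<inter> (Fa (fst y) \<times> Fb (snd y)) = {}"
        unfolding Fa_def Fb_def by (auto simp: prod_eq_iff)
    qed
    also have "\<dots> = (\<Sum>x\<in>R. ff M (card (fst x)) * ff N (card (snd x)))"
    proof (rule sum.cong[OF refl])
      fix x assume "x \<in> R"
      then have "partition_on I (fst x)" "partition_on I (snd x)" unfolding R_def using PI by auto
      then show "card (Fa (fst x) \<times> Fb (snd x)) = ff M (card (fst x)) * ff N (card (snd x))"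
        unfolding card_cartesian_product Fa_def Fb_def ff_def using ker_count2[OF fI] by simp
    qed
    finally show ?thesis .
  qed
  have LHS: "delta p M N = real (card A) / (real M * real N) ^ p"
    unfolding delta_def A_def I_def by simp
  have Dst: "delta_st p M N s t = real (ff M s) * real (ff N t) * real (c s t) / (real M * real N) ^ p"
    if s: "s \<in> {1..M}" and t: "t \<in> {1..N}" for s t
  proof (cases "s \<le> p \<and> t \<le> p")
    case True
    define Ss where "Ss = S_count p s"
    define St where "St = S_count p t"
    have ceps: "{(\<pi>, \<sigma>). \<pi> \<in> set_partitions p \<and> \<sigma> \<in> set_partitions p \<and>
        part_rel p \<pi> \<sigma> \<and> card \<pi> = s \<and> card \<sigma> = t} = {x\<in>R. card (fst x) = s \<and> card (snd x) = t}"
      unfolding R_def P_def by auto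
    have eps: "eps p s t = real (c s t) / (real Ss * real St)"
      unfolding eps_def ceps c_def Ss_def St_def by simp
    have cle: "c s t \<le> Ss * St"
    proof -
      have "{x\<in>R. card (fst x) = s \<and> card (snd x) = t} \<subseteq> {\<pi> \<in> P. card \<pi> = s} \<times> {\<pi> \<in> P. card \<pi> = t}"
        unfolding R_def by auto
      moreover have "finite ({\<pi> \<in> P. card \<pi> = s} \<times> {\<pi> \<in> P. card \<pi> = t})" using fP by simp
      ultimately have "c s t \<le> card ({\<pi> \<in> P. card \<pi> = s} \<times> {\<pi> \<in> P. card \<pi> = t})"
        unfolding c_def by (rule card_mono[rotated])
      then show ?thesis unfolding card_cartesian_product Ss_def St_def S_count_def P_def .
    qed
    have fs: "fact M / fact (M - s) = real (ff M s)" using ff_fact[of s M] s unfolding ff_def by simp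
    have ft: "fact N / fact (N - t) = real (ff N t)" using ff_fact[of t N] t unfolding ff_def by simp
    have ds: "delta_st p M N s t = real (ff M s) * (real Ss / real M ^ p) * real (ff N t) * (real St / real N ^ p)
       * (real (c s t) / (real Ss * real St))"
      unfolding delta_st_def using True s t fs ft eps Ss_def St_def by simp
    show ?thesis
    proof (cases "Ss = 0 \<or> St = 0")
      case True
      then have "c s t = 0" using cle by auto
      then show ?thesis using ds by simp
    next
      case False
      have M0: "real M \<noteq> 0" "real N \<noteq> 0" using assms by auto
      show ?thesis unfolding ds using False M0 by (simp add: field_simps power_mult_distrib)
    qed
  next
    case False
    have "delta_st p M N s t = 0" unfolding delta_st_def using False by auto
    moreover have "c s t = 0"
    proof -
      have e: "{x\<in>R. card (fst x) = s \<and> card (snd x) = t} = {}"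
        using False Pcard unfolding R_def by fastforce
      show ?thesis unfolding c_def e by simp
    qed
    ultimately show ?thesis by simp
  qed
  have creal: "real (c s t) = (\<Sum>x\<in>R. if card (fst x) = s \<and> card (snd x) = t then 1 else 0)" for s t
    unfolding c_def using fR by (simp add: sum.inter_filter[symmetric])
  have key: "(\<Sum>s=1..M. \<Sum>t=1..N. real (ff M s) * real (ff N t) * real (c s t))
      = (\<Sum>x\<in>R. real (ff M (card (fst x))) * real (ff N (card (snd x))))"
  proof -
    have "(\<Sum>s=1..M. \<Sum>t=1..N. real (ff M s) * real (ff N t) * real (c s t))
      = (\<Sum>s=1..M. \<Sum>t=1..N. \<Sum>x\<in>R. if card (fst x) = s \<and> card (snd x) = t then real (ff M s) * real (ff N t) else 0)"
      unfolding creal by (simp add: sum_distrib_left if_distrib cong: if_cong)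
    also have "\<dots> = (\<Sum>x\<in>R. \<Sum>s=1..M. \<Sum>t=1..N. if card (fst x) = s \<and> card (snd x) = t then real (ff M s) * real (ff N t) else 0)"
      by (subst sum.swap) (subst (2) sum.swap, rule refl)
    also have "\<dots> = (\<Sum>x\<in>R. real (ff M (card (fst x))) * real (ff N (card (snd x))))"
    proof (rule sum.cong[OF refl])
      fix x assume x: "x \<in> R"
      have a1: "1 \<le> card (fst x)" and b1: "1 \<le> card (snd x)" using x Pcard unfolding R_def by auto
      show "(\<Sum>s=1..M. \<Sum>t=1..N. if card (fst x) = s \<and> card (snd x) = t then real (ff M s) * real (ff N t) else 0)
          = real (ff M (card (fst x))) * real (ff N (card (snd x)))"
        by (rule delta_sum[OF a1 b1]) (simp_all add: ff_def ff_zero)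
    qed
    finally show ?thesis .
  qed
  have "(\<Sum>s=1..M. \<Sum>t=1..N. delta_st p M N s t)
      = (\<Sum>s=1..M. \<Sum>t=1..N. real (ff M s) * real (ff N t) * real (c s t) / (real M * real N) ^ p)"
    using Dst by (intro sum.cong refl) auto
  also have "\<dots> = (\<Sum>s=1..M. \<Sum>t=1..N. real (ff M s) * real (ff N t) * real (c s t)) / (real M * real N) ^ p"
    by (simp add: sum_divide_distrib)
  also have "\<dots> = real (card A) / (real M * real N) ^ p"
    unfolding key cardA by simp
  finally show ?thesis using LHS by simp
qed

end
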